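(* Let $P_1\subseteq P_2$ be meet semilattices with $0$ such that $P_1\subseteq P_2$ preserves finite covers. Suppose that for every $x\in P_2$ such that some element of $P_1$ is $\ge x$, there exist $y\in P_1$ with $x\le y$ and a finite set $\{y_1,\dots,y_n\}\subseteq P_1$ with $y_i\le y$ and $y_i\wedge x=0$ for all $i$, such that $\{y_1,\dots,y_n,x\}$ is a finite cover of $y$ in $P_2$. Then $P_1\subseteq P_2$ is tight, i.e. the image of the injective generalized Boolean algebra morphism $\mathcal T_c(P_1)\hookrightarrow\mathcal T_c(P_2)$, $U\mapsto re^{-1}(U)$, is an ideal of $\mathcal T_c(P_2)$.
   Context: A meet semilattice with $0$ is a meet semilattice with least element $0$; $P_1\subseteq P_2$ means an injective meet- and $0$-preserving map identifying $P_1$ with a subset of $P_2$. A filter of $P$ is a subset $F$ with $\emptyset\ne F\ne P$, closed upwards and under $\wedge$; $F(P)$ has the topology generated by $U_x=\{F:x\in F\}$, with basis of compact open sets $U_{(x:x_1,\dots,x_n)}=\{F:x\in F,\ x_1,\dots,x_n\notin F\}$. The tight filters $T(P)$ are the closure of the ultrafilters (maximal filters) in $F(P)$; $V^P_{(x:x_1,\dots,x_n)}=U_{(x:x_1,\dots,x_n)}\cap T(P)$, $V^P_x=V^P_{(x:)}$. $\mathcal T_c(P)$ is the generalized Boolean algebra of compact open subsets of the Hausdorff space $T(P)$. A finite cover of $x\in P$ is a finite set of elements $\le x$ such that every $0\ne y\le x$ meets one of them nontrivially. $P_1\subseteq P_2$ preserves finite covers if every finite cover in $P_1$ of $x\in P_1$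 is a finite cover of $x$ in $P_2$; in that case $re:\xi\mapsto\xi\cap P_1$ is a partial map $T(P_2)\dashrightarrow T(P_1)$ (defined when $\xi\cap P_1\ne\emptyset$), and $U\mapsto re^{-1}(U)$ is an injective generalized Boolean algebra morphism $\mathcal T_c(P_1)\to\mathcal T_c(P_2)$ sending $V^{P_1}_{(x:x_1,\dots,x_n)}\mapsto V^{P_2}_{(x:x_1,\dots,x_n)}$. An ideal of a generalized Boolean algebra $\mathcal B$ is a subset closed under joins and under meets with arbitrary elements of $\mathcal B$. *)

theory Defs
  imports "HOL-Analysis.Analysis"
begin

text \<open>Meet semilattices with 0 are modelled by the type class
  semilattice_inf + order_bot (bot = 0). A filter is a nonempty proper
  subset closed upwards and under meets.\<close>

definition is_filter :: "'a::{semilattice_inf,order_bot} set \<Rightarrow> bool" where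
  "is_filter F \<longleftrightarrow> F \<noteq> {} \<and> F \<noteq> UNIV
     \<and> (\<forall>x y. x \<in> F \<and> x \<le> y \<longrightarrow> y \<in> F)
     \<and> (\<forall>x y. x \<in> F \<and> y \<in> F \<longrightarrow> inf x y \<in> F)"

definition filters :: "'a::{semilattice_inf,order_bot} set set" where
  "filters = {F. is_filter F}"

definition ultrafilters :: "'a::{semilattice_inf,order_bot} set set" where
  "ultrafilters = {F. is_filter F \<and> (\<forall>G. is_filter G \<and> F \<subseteq> G \<longrightarrow> G = F)}"

definition basic_set :: "'a::{semilattice_inf,order_bot} \<Rightarrow> 'a set \<Rightarrow> 'a set set" where
  "basic_set x X = {F \<in> filters. x \<in> F \<and> X \<inter> F = {}}"

definition filter_topology :: "'a::{semilattice_inf,order_bot} set topology" where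
  "filter_topology = topology_generated_by {basic_set x X | x X. finite X}"

definition tight_filters :: "'a::{semilattice_inf,order_bot} set set" where
  "tight_filters = filter_topology closure_of ultrafilters"

definition tight_topology :: "'a::{semilattice_inf,order_bot} set topology" where
  "tight_topology = subtopology filter_topology tight_filters"

definition Tc :: "'a::{semilattice_inf,order_bot} set set set" where
  "Tc = {U. openin tight_topology U \<and> compactin tight_topology U}"

definition finite_cover :: "'a::{semilattice_inf,order_bot} set \<Rightarrow> 'a \<Rightarrow> bool" where
  "finite_cover C x \<longleftrightarrow> finite C \<and> (\<forall>c\<in>C. c \<le> x)
     \<and> (\<forall>y. y \<noteq> bot \<and> y \<le> x \<longrightarrow> (\<exists>c\<in>C. inf y c \<noteq> bot))"

definition semilattice_embedding ::
  "('a::{semilattice_inf,order_bot} \<Rightarrow> 'b::{semilattice_inf,order_bot}) \<Rightarrow> bool" where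
  "semilattice_embedding f \<longleftrightarrow> inj f \<and> f bot = bot \<and> (\<forall>x y. f (inf x y) = inf (f x) (f y))"

definition preserves_finite_covers ::
  "('a::{semilattice_inf,order_bot} \<Rightarrow> 'b::{semilattice_inf,order_bot}) \<Rightarrow> bool" where
  "preserves_finite_covers f \<longleftrightarrow>
     (\<forall>C x. finite_cover C x \<longrightarrow> finite_cover (f ` C) (f x))"

definition re_preimage ::
  "('a::{semilattice_inf,order_bot} \<Rightarrow> 'b::{semilattice_inf,order_bot}) \<Rightarrow> 'a set set \<Rightarrow> 'b set set" where
  "re_preimage f U = {\<xi> \<in> tight_filters. f -` \<xi> \<noteq> {} \<and> f -` \<xi> \<in> U}"

definition set_ideal :: "'c set set \<Rightarrow> 'c set set \<Rightarrow> bool" where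
  "set_ideal B I \<longleftrightarrow> I \<subseteq> B \<and> (\<forall>U\<in>I. \<forall>V\<in>I. U \<union> V \<in> I)
     \<and> (\<forall>U\<in>I. \<forall>W\<in>B. U \<inter> W \<in> I)"

definition tight_embedding ::
  "('a::{semilattice_inf,order_bot} \<Rightarrow> 'b::{semilattice_inf,order_bot}) \<Rightarrow> bool" where
  "tight_embedding f \<longleftrightarrow> set_ideal (Tc :: 'b set set set) (re_preimage f ` (Tc :: 'a set set set))"

end

theory Submission
  imports Defs
begin

lemma filter_bot: "is_filter F \<Longrightarrow> bot \<notin> F"
proof
  assume f: "is_filter F" and b: "bot \<in> F"
  then have "\<forall>y. y \<in> F" unfolding is_filter_def by (meson bot.extremum)
  then have "F = UNIV" by blast
  with f show False unfolding is_filter_def by blast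
qed

lemma filter_nonbot: "is_filter F \<Longrightarrow> x \<in> F \<Longrightarrow> x \<noteq> bot"
  using filter_bot by blast

lemma filter_up: "is_filter F \<Longrightarrow> x \<in> F \<Longrightarrow> x \<le> y \<Longrightarrow> y \<in> F"
  unfolding is_filter_def by blast

lemma filter_inf: "is_filter F \<Longrightarrow> x \<in> F \<Longrightarrow> y \<in> F \<Longrightarrow> inf x y \<in> F"
  unfolding is_filter_def by blast

lemma filter_inf_iff: "is_filter F \<Longrightarrow> inf x y \<in> F \<longleftrightarrow> x \<in> F \<and> y \<in> F"
  by (meson filter_inf filter_up inf.cobounded1 inf.cobounded2)

lemma topspace_filter_topology: "topspace filter_topology = filters"
  unfolding filter_topology_def topology_generated_by_topspace
proof
  show "\<Union> {basic_set x X |x X. finite X} \<subseteq> filters" unfolding basic_set_def by auto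
  show "filters \<subseteq> \<Union> {basic_set x X |x X. finite X}"
  proof
    fix F assume "F \<in> filters"
    then have f: "is_filter F" by (simp add: filters_def)
    then obtain x where "x \<in> F" unfolding is_filter_def by blast
    then have "F \<in> basic_set x {}" using \<open>F \<in> filters\<close> by (simp add: basic_set_def)
    then show "F \<in> \<Union> {basic_set x X |x X. finite X}" by blast
  qed
qed

lemma openin_basic: "finite X \<Longrightarrow> openin filter_topology (basic_set x X)"
  unfolding filter_topology_def by (rule topology_generated_by_Basis) blast

lemma basic_sub: "basic_set x X \<subseteq> filters"
  by (auto simp: basic_set_def)

lemma gen_base:
  assumes "generate_topology_on {basic_set x X | x X. finite X} Ov" "F \<in> Ov"
  shows "\<exists>x X. finite X \<and> F \<in> basic_set x X \<and> basic_set x X \<subseteq> Ov"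
  using assms
proof (induction rule: generate_topology_on.induct)
  case Empty
  then show ?case by simp
next
  case (Int a b)
  then obtain x X y Y where h: "finite X" "F \<in> basic_set x X" "basic_set x X \<subseteq> a"
    "finite Y" "F \<in> basic_set y Y" "basic_set y Y \<subseteq> b" by auto
  have "F \<in> basic_set (inf x y) (X \<union> Y)"
  proof -
    have "is_filter F" "x \<in> F" "y \<in> F" "X \<inter> F = {}" "Y \<inter> F = {}"
      using h(2,5) by (auto simp: basic_set_def filters_def)
    then show ?thesis by (simp add: basic_set_def filters_def filter_inf Int_Un_distrib2)
  qed
  moreover have "basic_set (inf x y) (X \<union> Y) \<subseteq> basic_set x X \<inter> basic_set y Y"
    unfolding basic_set_def filters_def using filter_inf_iff by blast
  ultimately show ?case using h by blast
next
  case (UN K)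
  then obtain k where "k \<in> K" "F \<in> k" by blast
  with UN.IH obtain x X where "finite X" "F \<in> basic_set x X" "basic_set x X \<subseteq> k" by blast
  then show ?case using \<open>k \<in> K\<close> by blast
next
  case (Basis s)
  then obtain x X where "s = basic_set x X" "finite X" by blast
  then show ?case using Basis.prems by blast
qed

lemma open_base:
  assumes "openin filter_topology Ov" "F \<in> Ov"
  shows "\<exists>x X. finite X \<and> F \<in> basic_set x X \<and> basic_set x X \<subseteq> Ov"
proof -
  have "generate_topology_on {basic_set x X | x X. finite X} Ov"
    using assms(1) unfolding filter_topology_def by (rule openin_topology_generated_by)
  from gen_base[OF this assms(2)] show ?thesis .
qed


definition PT :: "('a \<Rightarrow> bool) topology" where
  "PT = product_topology (\<lambda>_. discrete_topology (UNIV::bool set)) UNIV"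

lemma topspace_PT[simp]: "topspace PT = UNIV"
  by (simp add: PT_def)

lemma compact_PT: "compact_space PT"
  unfolding PT_def by (simp add: compact_space_product_topology compact_space_discrete_topology)

lemma proj_cont: "continuous_map PT (discrete_topology UNIV) (\<lambda>p. p a)"
  unfolding PT_def by (rule continuous_map_product_projection) simp

lemma open_pos: "openin PT {p. p a = v}"
proof -
  have "openin PT {p \<in> topspace PT. p a \<in> {v}}"
    by (rule openin_continuous_map_preimage[OF proj_cont]) simp
  then show ?thesis by simp
qed

lemma closed_pos: "closedin PT {p. p a = v}"
proof -
  have "closedin PT {p \<in> topspace PT. p a \<in> {v}}"
    by (rule closedin_continuous_map_preimage[OF proj_cont]) simp
  then show ?thesis by simp
qed

lemma closed_T: "closedin PT {p. p a}" using closed_pos[of a True] by simp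
lemma closed_F: "closedin PT {p. \<not> p a}" using closed_pos[of a False] by simp

lemma open_cyl: "finite Y \<Longrightarrow> openin PT {q. q y \<and> (\<forall>z\<in>Y. \<not> q z)}"
proof (induction Y rule: finite_induct)
  case empty
  then show ?case using open_pos[of y True] by simp
next
  case (insert w Y)
  have "{q. q y \<and> (\<forall>z\<in>insert w Y. \<not> q z)} = {q. q y \<and> (\<forall>z\<in>Y. \<not> q z)} \<inter> {q. q w = False}"
    by auto
  then show ?case using insert.IH open_pos[of w False] by (simp add: openin_Int)
qed

lemma char_basic:
  "Collect p \<in> basic_set x X \<longleftrightarrow> p x \<and> \<not> p bot \<and> (\<forall>z\<in>X. \<not> p z)
     \<and> (\<forall>a b. a \<le> b \<longrightarrow> p a \<longrightarrow> p b) \<and> (\<forall>a b. p a \<longrightarrow> p b \<longrightarrow> p (inf a b))"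
proof
  assume h: "Collect p \<in> basic_set x X"
  then have f: "is_filter (Collect p)" by (simp add: basic_set_def filters_def)
  then have "\<not> p bot" using filter_bot by fastforce
  moreover have "p x" "\<forall>z\<in>X. \<not> p z" using h by (auto simp: basic_set_def)
  moreover have "\<forall>a b. a \<le> b \<longrightarrow> p a \<longrightarrow> p b" using f unfolding is_filter_def by blast
  moreover have "\<forall>a b. p a \<longrightarrow> p b \<longrightarrow> p (inf a b)" using f unfolding is_filter_def by blast
  ultimately show "p x \<and> \<not> p bot \<and> (\<forall>z\<in>X. \<not> p z)
     \<and> (\<forall>a b. a \<le> b \<longrightarrow> p a \<longrightarrow> p b) \<and> (\<forall>a b. p a \<longrightarrow> p b \<longrightarrow> p (inf a b))" by blast
next
  assume h: "p x \<and> \<not> p bot \<and> (\<forall>z\<in>X. \<not> p z)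
     \<and> (\<forall>a b. a \<le> b \<longrightarrow> p a \<longrightarrow> p b) \<and> (\<forall>a b. p a \<longrightarrow> p b \<longrightarrow> p (inf a b))"
  have px: "p x" and nb: "\<not> p bot" and nX: "\<forall>z\<in>X. \<not> p z"
    and up: "\<forall>a b. a \<le> b \<longrightarrow> p a \<longrightarrow> p b" and mt: "\<forall>a b. p a \<longrightarrow> p b \<longrightarrow> p (inf a b)"
    using h by simp_all
  have "x \<in> Collect p" using px by simp
  then have ne: "Collect p \<noteq> {}" by blast
  have "bot \<notin> Collect p" using nb by simp
  then have nu: "Collect p \<noteq> UNIV" by blast
  have "is_filter (Collect p)" unfolding is_filter_def
    using ne nu up mt by (simp, blast)
  moreover have "X \<inter> Collect p = {}" using nX by blast
  ultimately show "Collect p \<in> basic_set x X" using px by (simp add: basic_set_def filters_def)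
qed

lemma closed_imp1: "closedin PT {p. p a \<longrightarrow> p b}"
proof -
  have "{p. p a \<longrightarrow> p b} = {p. \<not> p a} \<union> {p. p b}" by auto
  then show ?thesis using closedin_Un[OF closed_F closed_T] by simp
qed

lemma closed_imp2: "closedin PT {p. p a \<longrightarrow> p b \<longrightarrow> p c}"
proof -
  have "{p. p a \<longrightarrow> p b \<longrightarrow> p c} = {p. \<not> p a} \<union> {p. p b \<longrightarrow> p c}" by auto
  then show ?thesis using closedin_Un[OF closed_F closed_imp1] by simp
qed

lemma Inter_setcompr1: "p \<in> \<Inter>{f z | z. Q z} \<longleftrightarrow> (\<forall>z. Q z \<longrightarrow> p \<in> f z)"
  by blast
lemma Inter_setcompr2: "p \<in> \<Inter>{f a b | a b. Q a b} \<longleftrightarrow> (\<forall>a b. Q a b \<longrightarrow> p \<in> f a b)"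
  by blast

lemma closed_S: "closedin PT {p. Collect p \<in> basic_set x X}"
proof -
  define K where "K = {{p. p x}, {p. \<not> p bot}} \<union> {{p. \<not> p z} | z. z \<in> X}
     \<union> {{p. p a \<longrightarrow> p b} | a b. a \<le> b} \<union> {{p. p a \<longrightarrow> p b \<longrightarrow> p (inf a b)} | a b. True}"
  have "closedin PT (\<Inter>K)"
  proof (rule closedin_Inter)
    show "K \<noteq> {}" unfolding K_def by blast
    show "\<And>S. S \<in> K \<Longrightarrow> closedin PT S"
      unfolding K_def by (auto simp: closed_T closed_F closed_imp1 closed_imp2)
  qed
  moreover have "\<Inter>K = {p. Collect p \<in> basic_set x X}"
  proof (rule set_eqI)
    fix p
    have "p \<in> \<Inter>K \<longleftrightarrow> p x \<and> \<not> p bot \<and> (\<forall>z\<in>X. \<not> p z)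
     \<and> (\<forall>a b. a \<le> b \<longrightarrow> p a \<longrightarrow> p b) \<and> (\<forall>a b. p a \<longrightarrow> p b \<longrightarrow> p (inf a b))"
      unfolding K_def Inter_Un_distrib Int_iff Inter_setcompr1 Inter_setcompr2
      by (simp add: Ball_def)
    then show "p \<in> \<Inter>K \<longleftrightarrow> p \<in> {p. Collect p \<in> basic_set x X}"
      unfolding mem_Collect_eq[of p] char_basic by simp
  qed
  ultimately show ?thesis by simp
qed

lemma compact_basic: "compactin filter_topology (basic_set x X)"
proof -
  define S where "S = {p. Collect p \<in> basic_set x X}"
  have "compactin PT S" unfolding S_def by (rule closedin_compact_space[OF compact_PT closed_S])
  then have c1: "compactin (subtopology PT S) S" by (simp add: compactin_subtopology)
  have cont: "continuous_map (subtopology PT S) filter_topology Collect"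
    unfolding continuous_map
  proof (intro conjI allI impI)
    show "Collect ` topspace (subtopology PT S) \<subseteq> topspace filter_topology"
      unfolding topspace_filter_topology S_def using basic_sub by auto
    fix U :: "'a set set"
    assume U: "openin filter_topology U"
    show "openin (subtopology PT S) {p \<in> topspace (subtopology PT S). Collect p \<in> U}"
    proof (subst openin_subopen, intro ballI)
      fix p assume p: "p \<in> {p \<in> topspace (subtopology PT S). Collect p \<in> U}"
      then obtain y Y where yY: "finite Y" "Collect p \<in> basic_set y Y" "basic_set y Y \<subseteq> U"
        using open_base[OF U] by blast
      define T where "T = {q. q y \<and> (\<forall>z\<in>Y. \<not> q z)}"
      have oT: "openin (subtopology PT S) (T \<inter> S)"
        unfolding T_def by (rule openin_subtopology_Int[OF open_cyl[OF yY(1)]])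
      have pT: "p \<in> T \<inter> S" using p yY(2) unfolding T_def S_def char_basic by auto
      have "T \<inter> S \<subseteq> {p \<in> topspace (subtopology PT S). Collect p \<in> U}"
      proof
        fix q assume q: "q \<in> T \<inter> S"
        then have "Collect q \<in> basic_set y Y" unfolding T_def S_def char_basic by auto
        then show "q \<in> {p \<in> topspace (subtopology PT S). Collect p \<in> U}"
          using q yY(3) by auto
      qed
      then show "\<exists>T. openin (subtopology PT S) T \<and> p \<in> T \<and> T \<subseteq> {p \<in> topspace (subtopology PT S). Collect p \<in> U}"
        using oT pT by blast
    qed
  qed
  have "compactin filter_topology (Collect ` S)" by (rule image_compactin[OF c1 cont])
  moreover have "Collect ` S = basic_set x X"
  proof
    show "Collect ` S \<subseteq> basic_set x X" unfolding S_def by auto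
    show "basic_set x X \<subseteq> Collect ` S"
    proof
      fix F assume "F \<in> basic_set x X"
      then have "(\<lambda>a. a \<in> F) \<in> S" unfolding S_def by simp
      then show "F \<in> Collect ` S" by (metis Collect_mem_eq image_eqI)
    qed
  qed
  ultimately show ?thesis by simp
qed


section \<open>Tight filters\<close>

lemma tight_sub: "tight_filters \<subseteq> filters"
  unfolding tight_filters_def using closure_of_subset_topspace topspace_filter_topology by metis

lemma topspace_tight: "topspace tight_topology = tight_filters"
  unfolding tight_topology_def using tight_sub topspace_filter_topology by auto

lemma closed_tight: "closedin filter_topology tight_filters"
  unfolding tight_filters_def by simp

lemma V_Tc: "finite X \<Longrightarrow> basic_set x X \<inter> tight_filters \<in> Tc"
proof -
  assume X: "finite X"
  have "openin tight_topology (basic_set x X \<inter> tight_filters)"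
    unfolding tight_topology_def by (rule openin_subtopology_Int[OF openin_basic[OF X]])
  moreover have "compactin filter_topology (basic_set x X \<inter> tight_filters)"
    by (rule compact_Int_closedin[OF compact_basic closed_tight])
  then have "compactin tight_topology (basic_set x X \<inter> tight_filters)"
    unfolding tight_topology_def by (simp add: compactin_subtopology)
  ultimately show ?thesis unfolding Tc_def by simp
qed

lemma haus_aux:
  assumes "F \<in> filters" "G \<in> filters" "x \<in> F" "x \<notin> G"
  shows "\<exists>U V. openin filter_topology U \<and> openin filter_topology V \<and> F \<in> U \<and> G \<in> V \<and> disjnt U V"
proof -
  have "is_filter G" using assms by (simp add: filters_def)
  then obtain g where g: "g \<in> G" unfolding is_filter_def by blast
  have "F \<in> basic_set x {}" using assms by (simp add: basic_set_def)
  moreover have "G \<in> basic_set g {x}" using assms g by (simp add: basic_set_def)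
  moreover have "disjnt (basic_set x {}) (basic_set g {x})"
    unfolding disjnt_def basic_set_def by blast
  ultimately show ?thesis using openin_basic[of "{}" x] openin_basic[of "{x}" g] by blast
qed

lemma haus_filter: "Hausdorff_space filter_topology"
  unfolding Hausdorff_space_def topspace_filter_topology
proof (intro allI impI)
  fix F G :: "'a set" assume h: "F \<in> filters \<and> G \<in> filters \<and> F \<noteq> G"
  then obtain x where "(x \<in> F \<and> x \<notin> G) \<or> (x \<in> G \<and> x \<notin> F)" by blast
  then show "\<exists>U V. openin filter_topology U \<and> openin filter_topology V \<and> F \<in> U \<and> G \<in> V \<and> disjnt U V"
  proof
    assume "x \<in> F \<and> x \<notin> G" then show ?thesis using h by (intro haus_aux) auto
  next
    assume "x \<in> G \<and> x \<notin> F"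
    then obtain U V where "openin filter_topology U" "openin filter_topology V" "G \<in> U" "F \<in> V" "disjnt U V"
      using haus_aux[of G F x] h by auto
    then show ?thesis using disjnt_sym by blast
  qed
qed

lemma haus_tight: "Hausdorff_space tight_topology"
  unfolding tight_topology_def by (rule Hausdorff_space_subtopology[OF haus_filter])

lemma Tc_empty: "{} \<in> Tc"
  unfolding Tc_def by simp

lemma Tc_Un: "U \<in> Tc \<Longrightarrow> V \<in> Tc \<Longrightarrow> U \<union> V \<in> Tc"
  unfolding Tc_def by (auto intro: compactin_Un)

lemma Tc_Diff: "U \<in> Tc \<Longrightarrow> V \<in> Tc \<Longrightarrow> U - V \<in> Tc"
proof -
  assume U: "U \<in> Tc" and V: "V \<in> Tc"
  have cU: "closedin tight_topology U" using U compactin_imp_closedin[OF haus_tight] unfolding Tc_def by blast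
  have cV: "closedin tight_topology V" using V compactin_imp_closedin[OF haus_tight] unfolding Tc_def by blast
  have o: "openin tight_topology (U - V)" using U cV unfolding Tc_def by blast
  have "closedin tight_topology (U - V)" using cU V unfolding Tc_def by blast
  then have "compactin tight_topology (U - V)"
    using closed_compactin[of tight_topology U "U - V"] U unfolding Tc_def by blast
  then show ?thesis using o unfolding Tc_def by blast
qed

lemma Tc_dec:
  assumes "U \<in> Tc"
  shows "\<exists>S. finite S \<and> (\<forall>p\<in>S. finite (snd p))
           \<and> U = \<Union>((\<lambda>p. basic_set (fst p) (snd p) \<inter> tight_filters) ` S)"
proof -
  define g where "g = (\<lambda>p. basic_set (fst p) (snd p) \<inter> (tight_filters :: 'a set set))"
  define A where "A = {p. finite (snd p) \<and> g p \<subseteq> U}"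
  have oU: "openin tight_topology U" and cU: "compactin tight_topology U" using assms unfolding Tc_def by auto
  then obtain Op where Op: "openin filter_topology Op" "U = Op \<inter> tight_filters"
    unfolding tight_topology_def openin_subtopology by blast
  have cover: "U \<subseteq> \<Union>(g ` A)"
  proof
    fix F assume F: "F \<in> U"
    then obtain x X where "finite X" "F \<in> basic_set x X" "basic_set x X \<subseteq> Op"
      using open_base[OF Op(1)] Op(2) by blast
    then have "(x, X) \<in> A" "F \<in> g (x, X)" using F Op(2) unfolding A_def g_def by auto
    then show "F \<in> \<Union>(g ` A)" by blast
  qed
  have "\<forall>B\<in>g ` A. openin tight_topology B"
  proof
    fix B assume "B \<in> g ` A"
    then obtain p where "p \<in> A" "B = g p" by blast
    then show "openin tight_topology B" using V_Tc[of "snd p" "fst p"] unfolding A_def g_def Tc_def by auto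
  qed
  then obtain \<F> where F: "finite \<F>" "\<F> \<subseteq> g ` A" "U \<subseteq> \<Union>\<F>"
    using cU cover unfolding compactin_def by meson
  then obtain S where S: "S \<subseteq> A" "finite S" "\<F> = g ` S"
    using finite_subset_image by meson
  have "U = \<Union>(g ` S)" using F(3) S unfolding A_def by auto
  moreover have "\<forall>p\<in>S. finite (snd p)" using S unfolding A_def by auto
  ultimately show ?thesis using S(2) unfolding g_def by blast
qed

definition cov_prop :: "'a::{semilattice_inf,order_bot} set \<Rightarrow> bool" where
  "cov_prop \<xi> \<longleftrightarrow> (\<forall>x\<in>\<xi>. \<forall>C. finite_cover C x \<longrightarrow> C \<inter> \<xi> \<noteq> {})"

lemma principal_filter: "w \<noteq> bot \<Longrightarrow> is_filter {z. w \<le> z}"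
proof -
  assume w: "w \<noteq> bot"
  have "bot \<notin> {z. w \<le> z}" using w by (simp add: bot_unique)
  then have "{z. w \<le> z} \<noteq> UNIV" by blast
  moreover have "{z. w \<le> z} \<noteq> {}" by blast
  ultimately show ?thesis unfolding is_filter_def by (auto intro: order_trans)
qed

lemma ultra_exists:
  assumes w: "w \<noteq> bot"
  shows "\<exists>\<eta>\<in>ultrafilters. w \<in> \<eta>"
proof -
  define A where "A = {F. is_filter F \<and> w \<in> F}"
  have "{z. w \<le> z} \<in> A" using principal_filter[OF w] unfolding A_def by simp
  then have ne: "A \<noteq> {}" by blast
  have ch: "\<Union>C \<in> A" if C: "C \<noteq> {}" "subset.chain A C" for C
  proof -
    have CA: "C \<subseteq> A" and lin: "\<forall>X\<in>C. \<forall>Y\<in>C. X \<subseteq> Y \<or> Y \<subseteq> X"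
      using C(2) unfolding subset_chain_def by auto
    obtain F0 where F0: "F0 \<in> C" using C(1) by blast
    have wC: "w \<in> \<Union>C" using F0 CA unfolding A_def by blast
    have "bot \<notin> \<Union>C"
    proof
      assume "bot \<in> \<Union>C"
      then obtain F where "F \<in> C" "bot \<in> F" by blast
      then show False using CA filter_bot unfolding A_def by blast
    qed
    then have nu: "\<Union>C \<noteq> UNIV" by blast
    have up: "\<forall>x y. x \<in> \<Union>C \<and> x \<le> y \<longrightarrow> y \<in> \<Union>C"
    proof (intro allI impI)
      fix x y assume "x \<in> \<Union>C \<and> x \<le> y"
      then obtain F where "F \<in> C" "x \<in> F" "x \<le> y" by blast
      then have "y \<in> F" using CA filter_up unfolding A_def by blast
      then show "y \<in> \<Union>C" using \<open>F \<in> C\<close> by blast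
    qed
    have mt: "\<forall>x y. x \<in> \<Union>C \<and> y \<in> \<Union>C \<longrightarrow> inf x y \<in> \<Union>C"
    proof (intro allI impI)
      fix x y assume "x \<in> \<Union>C \<and> y \<in> \<Union>C"
      then obtain F G where FG: "F \<in> C" "x \<in> F" "G \<in> C" "y \<in> G" by blast
      show "inf x y \<in> \<Union>C"
      proof (cases "F \<subseteq> G")
        case True
        then have "inf x y \<in> G" using FG CA filter_inf unfolding A_def by blast
        then show ?thesis using FG by blast
      next
        case False
        then have "G \<subseteq> F" using lin FG by blast
        then have "inf x y \<in> F" using FG CA filter_inf unfolding A_def by blast
        then show ?thesis using FG by blast
      qed
    qed
    have "is_filter (\<Union>C)" unfolding is_filter_def using wC nu up mt by blast
    then show ?thesis using wC unfolding A_def by blast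
  qed
  obtain M where M: "M \<in> A" "\<forall>X\<in>A. M \<subseteq> X \<longrightarrow> X = M"
    using subset_Zorn_nonempty[OF ne ch] by blast
  have "M \<in> ultrafilters"
    unfolding ultrafilters_def using M unfolding A_def by blast
  then show ?thesis using M(1) unfolding A_def by blast
qed

lemma ultra_filter: "\<eta> \<in> ultrafilters \<Longrightarrow> is_filter \<eta>"
  unfolding ultrafilters_def by simp

lemma ultra_disj:
  assumes u: "\<eta> \<in> ultrafilters" and c: "c \<notin> \<eta>"
  shows "\<exists>u\<in>\<eta>. inf u c = bot"
proof (rule ccontr)
  assume "\<not> (\<exists>u\<in>\<eta>. inf u c = bot)"
  then have nb: "\<forall>u\<in>\<eta>. inf u c \<noteq> bot" by blast
  have f: "is_filter \<eta>" using u by (rule ultra_filter)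
  then obtain u0 where u0: "u0 \<in> \<eta>" unfolding is_filter_def by blast
  define G where "G = {z. \<exists>u\<in>\<eta>. inf u c \<le> z}"
  have "bot \<notin> G" using nb unfolding G_def by (auto simp: bot_unique)
  then have nu: "G \<noteq> UNIV" by blast
  have cG: "c \<in> G" using u0 unfolding G_def by auto
  then have ne: "G \<noteq> {}" by blast
  have up: "\<forall>x y. x \<in> G \<and> x \<le> y \<longrightarrow> y \<in> G" unfolding G_def using order_trans by blast
  have mt: "\<forall>x y. x \<in> G \<and> y \<in> G \<longrightarrow> inf x y \<in> G"
  proof (intro allI impI)
    fix x y assume "x \<in> G \<and> y \<in> G"
    then obtain u1 u2 where "u1 \<in> \<eta>" "inf u1 c \<le> x" "u2 \<in> \<eta>" "inf u2 c \<le> y" unfolding G_def by blast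
    moreover have "inf (inf u1 u2) c \<le> inf x y"
    proof (rule le_infI)
      have "inf (inf u1 u2) c \<le> inf u1 c" by (rule inf_mono[OF inf.cobounded1 order_refl])
      then show "inf (inf u1 u2) c \<le> x" using calculation(2) by (rule order_trans)
      have "inf (inf u1 u2) c \<le> inf u2 c" by (rule inf_mono[OF inf.cobounded2 order_refl])
      then show "inf (inf u1 u2) c \<le> y" using calculation(4) by (rule order_trans)
    qed
    moreover have "inf u1 u2 \<in> \<eta>" using f calculation filter_inf by blast
    ultimately show "inf x y \<in> G" unfolding G_def by blast
  qed
  have "is_filter G" unfolding is_filter_def using ne nu up mt by blast
  moreover have "\<eta> \<subseteq> G" unfolding G_def using inf.cobounded1 by blast
  ultimately have "G = \<eta>" using u unfolding ultrafilters_def by blast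
  then show False using cG c by blast
qed

lemma finite_meet:
  assumes f: "is_filter \<eta>" and C: "finite C" and x: "x \<in> \<eta>"
    and h: "\<forall>c\<in>C. \<exists>u\<in>\<eta>. inf u c = bot"
  shows "\<exists>w\<in>\<eta>. w \<le> x \<and> (\<forall>c\<in>C. inf w c = bot)"
  using C h
proof (induction C rule: finite_induct)
  case empty
  then show ?case using x by blast
next
  case (insert c C)
  then obtain w where w: "w \<in> \<eta>" "w \<le> x" "\<forall>c\<in>C. inf w c = bot" by blast
  obtain u where u: "u \<in> \<eta>" "inf u c = bot" using insert.prems by blast
  have "inf w u \<in> \<eta>" using f w u filter_inf by blast
  moreover have "inf w u \<le> x" using w by (meson inf.coboundedI1)
  moreover have "\<forall>c'\<in>insert c C. inf (inf w u) c' = bot"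
  proof
    fix c' assume "c' \<in> insert c C"
    then show "inf (inf w u) c' = bot"
    proof
      assume "c' = c"
      have "inf (inf w u) c \<le> inf u c" by (meson inf.cobounded2 inf_mono order_refl)
      then show ?thesis using u \<open>c' = c\<close> by (simp add: bot_unique)
    next
      assume "c' \<in> C"
      have "inf (inf w u) c' \<le> inf w c'" by (meson inf.cobounded1 inf_mono order_refl)
      then show ?thesis using w \<open>c' \<in> C\<close> by (simp add: bot_unique)
    qed
  qed
  ultimately show ?case by blast
qed

lemma tight_cov:
  assumes t: "\<xi> \<in> tight_filters"
  shows "is_filter \<xi> \<and> cov_prop \<xi>"
proof -
  have fx: "\<xi> \<in> filters" using t tight_sub by blast
  then have f: "is_filter \<xi>" by (simp add: filters_def)
  have "cov_prop \<xi>" unfolding cov_prop_def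
  proof (intro ballI allI impI)
    fix x C assume x: "x \<in> \<xi>" and C: "finite_cover C x"
    show "C \<inter> \<xi> \<noteq> {}"
    proof
      assume e: "C \<inter> \<xi> = {}"
      have fC: "finite C" using C unfolding finite_cover_def by blast
      have "\<xi> \<in> basic_set x C" using fx x e by (simp add: basic_set_def)
      moreover have "openin filter_topology (basic_set x C)" using openin_basic[OF fC] .
      ultimately obtain \<eta> where \<eta>: "\<eta> \<in> ultrafilters" "\<eta> \<in> basic_set x C"
        using t unfolding tight_filters_def in_closure_of by blast
      have f\<eta>: "is_filter \<eta>" using \<eta>(1) by (rule ultra_filter)
      have x\<eta>: "x \<in> \<eta>" and C\<eta>: "C \<inter> \<eta> = {}" using \<eta>(2) by (auto simp: basic_set_def)
      have "\<forall>c\<in>C. \<exists>u\<in>\<eta>. inf u c = bot" using ultra_disj[OF \<eta>(1)] C\<eta> by blast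
      then obtain w where w: "w \<in> \<eta>" "w \<le> x" "\<forall>c\<in>C. inf w c = bot"
        using finite_meet[OF f\<eta> fC x\<eta>] by blast
      have "w \<noteq> bot" using filter_nonbot[OF f\<eta> w(1)] .
      then obtain c where "c \<in> C" "inf w c \<noteq> bot" using C w(2) unfolding finite_cover_def by blast
      then show False using w(3) by blast
    qed
  qed
  then show ?thesis using f by blast
qed

lemma cov_tight:
  assumes f: "is_filter \<xi>" and c: "cov_prop \<xi>"
  shows "\<xi> \<in> tight_filters"
  unfolding tight_filters_def in_closure_of
proof (intro conjI allI impI)
  show fx: "\<xi> \<in> topspace filter_topology" using f by (simp add: topspace_filter_topology filters_def)
  fix T assume T: "\<xi> \<in> T \<and> openin filter_topology T"
  then obtain y Y where yY: "finite Y" "\<xi> \<in> basic_set y Y" "basic_set y Y \<subseteq> T"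
    using open_base by blast
  have y: "y \<in> \<xi>" and Y: "Y \<inter> \<xi> = {}" using yY(2) by (auto simp: basic_set_def)
  define C where "C = (\<lambda>z. inf y z) ` Y"
  have nc: "\<not> finite_cover C y"
  proof
    assume "finite_cover C y"
    then have "C \<inter> \<xi> \<noteq> {}" using c y unfolding cov_prop_def by blast
    then obtain z where "z \<in> Y" "inf y z \<in> \<xi>" unfolding C_def by blast
    then have "z \<in> \<xi>" using filter_inf_iff[OF f] by blast
    then show False using Y \<open>z \<in> Y\<close> by blast
  qed
  have "finite C" "\<forall>c\<in>C. c \<le> y" using yY(1) unfolding C_def by auto
  then obtain w where w: "w \<noteq> bot" "w \<le> y" "\<forall>c\<in>C. inf w c = bot"
    using nc unfolding finite_cover_def by blast
  obtain \<eta> where \<eta>: "\<eta> \<in> ultrafilters" "w \<in> \<eta>" using ultra_exists[OF w(1)] by blast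
  have f\<eta>: "is_filter \<eta>" using \<eta>(1) by (rule ultra_filter)
  have "y \<in> \<eta>" using filter_up[OF f\<eta> \<eta>(2) w(2)] .
  moreover have "Y \<inter> \<eta> = {}"
  proof (rule ccontr)
    assume "Y \<inter> \<eta> \<noteq> {}"
    then obtain z where z: "z \<in> Y" "z \<in> \<eta>" by blast
    have "inf w z \<in> \<eta>" using filter_inf[OF f\<eta> \<eta>(2) z(2)] .
    moreover have "inf w z = inf w (inf y z)" using w(2) by (simp add: inf.absorb1 inf_assoc[symmetric])
    moreover have "inf w (inf y z) = bot" using w(3) z(1) unfolding C_def by blast
    ultimately show False using filter_bot[OF f\<eta>] by simp
  qed
  ultimately have "\<eta> \<in> basic_set y Y" using f\<eta> by (simp add: basic_set_def filters_def)
  then show "\<exists>\<eta>. \<eta> \<in> ultrafilters \<and> \<eta> \<in> T" using \<eta>(1) yY(3) by blast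
qed

lemma tight_char: "\<xi> \<in> tight_filters \<longleftrightarrow> is_filter \<xi> \<and> cov_prop \<xi>"
  using tight_cov cov_tight by blast


section \<open>Restriction\<close>

lemma emb_mono:
  assumes e: "semilattice_embedding f" and le: "a \<le> b"
  shows "f a \<le> f b"
proof -
  have "inf a b = a" using le by (simp add: inf.absorb1)
  then have "f a = inf (f a) (f b)" using e unfolding semilattice_embedding_def by metis
  then show ?thesis by (metis inf.cobounded2)
qed

lemma restrict_filter:
  assumes e: "semilattice_embedding f" and fx: "is_filter \<xi>" and ne: "f -` \<xi> \<noteq> {}"
  shows "is_filter (f -` \<xi>)"
proof -
  have fb: "f bot = bot" using e unfolding semilattice_embedding_def by blast
  have "bot \<notin> f -` \<xi>" using filter_bot[OF fx] fb by simp
  then have nu: "f -` \<xi> \<noteq> UNIV" by blast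
  have up: "\<forall>x y. x \<in> f -` \<xi> \<and> x \<le> y \<longrightarrow> y \<in> f -` \<xi>"
    using filter_up[OF fx] emb_mono[OF e] by blast
  have mt: "\<forall>x y. x \<in> f -` \<xi> \<and> y \<in> f -` \<xi> \<longrightarrow> inf x y \<in> f -` \<xi>"
    using filter_inf[OF fx] e unfolding semilattice_embedding_def by simp
  show ?thesis unfolding is_filter_def using ne nu up mt by blast
qed

lemma restrict_tight:
  fixes f :: "'a::{semilattice_inf,order_bot} \<Rightarrow> 'b::{semilattice_inf,order_bot}"
  assumes e: "semilattice_embedding f" and p: "preserves_finite_covers f"
    and t: "\<xi> \<in> tight_filters" and ne: "f -` \<xi> \<noteq> {}"
  shows "f -` \<xi> \<in> tight_filters"
proof -
  have fx: "is_filter \<xi>" and c: "cov_prop \<xi>" using t tight_char by blast+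
  have "cov_prop (f -` \<xi>)" unfolding cov_prop_def
  proof (intro ballI allI impI)
    fix x C assume x: "x \<in> f -` \<xi>" and C: "finite_cover C x"
    have "finite_cover (f ` C) (f x)" using p C unfolding preserves_finite_covers_def by blast
    then have "f ` C \<inter> \<xi> \<noteq> {}" using c x unfolding cov_prop_def by blast
    then show "C \<inter> f -` \<xi> \<noteq> {}" by blast
  qed
  then show ?thesis using tight_char restrict_filter[OF e fx ne] by blast
qed

lemma re_basic:
  fixes f :: "'a::{semilattice_inf,order_bot} \<Rightarrow> 'b::{semilattice_inf,order_bot}"
  assumes e: "semilattice_embedding f" and p: "preserves_finite_covers f"
  shows "re_preimage f (basic_set x X \<inter> tight_filters) = basic_set (f x) (f ` X) \<inter> tight_filters"
proof
  show "re_preimage f (basic_set x X \<inter> tight_filters) \<subseteq> basic_set (f x) (f ` X) \<inter> tight_filters"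
  proof
    fix \<xi> assume "\<xi> \<in> re_preimage f (basic_set x X \<inter> tight_filters)"
    then have t: "\<xi> \<in> tight_filters" and b: "f -` \<xi> \<in> basic_set x X" unfolding re_preimage_def by auto
    have "f x \<in> \<xi>" "f ` X \<inter> \<xi> = {}" using b unfolding basic_set_def by auto
    moreover have "\<xi> \<in> filters" using t tight_sub by blast
    ultimately show "\<xi> \<in> basic_set (f x) (f ` X) \<inter> tight_filters" using t unfolding basic_set_def by blast
  qed
  show "basic_set (f x) (f ` X) \<inter> tight_filters \<subseteq> re_preimage f (basic_set x X \<inter> tight_filters)"
  proof
    fix \<xi> assume h: "\<xi> \<in> basic_set (f x) (f ` X) \<inter> tight_filters"
    then have t: "\<xi> \<in> tight_filters" and fx: "f x \<in> \<xi>" and fX: "f ` X \<inter> \<xi> = {}"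
      unfolding basic_set_def by auto
    have ne: "f -` \<xi> \<noteq> {}" using fx by blast
    have t1: "f -` \<xi> \<in> tight_filters" using restrict_tight[OF e p t ne] .
    then have "f -` \<xi> \<in> filters" using tight_sub by blast
    moreover have "x \<in> f -` \<xi>" "X \<inter> f -` \<xi> = {}" using fx fX by auto
    ultimately have "f -` \<xi> \<in> basic_set x X" unfolding basic_set_def by blast
    then show "\<xi> \<in> re_preimage f (basic_set x X \<inter> tight_filters)"
      using t ne t1 unfolding re_preimage_def by blast
  qed
qed

lemma re_Un: "re_preimage f (U \<union> V) = re_preimage f U \<union> re_preimage f V"
  unfolding re_preimage_def by auto

lemma re_Diff: "re_preimage f (U - V) = re_preimage f U - re_preimage f V"
  unfolding re_preimage_def by auto

lemma re_empty: "re_preimage f {} = {}"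
  unfolding re_preimage_def by auto

lemma re_UN: "re_preimage f (\<Union>(g ` S)) = (\<Union>p\<in>S. re_preimage f (g p))"
  unfolding re_preimage_def by auto

lemma Tc_UN: "finite S \<Longrightarrow> (\<forall>p\<in>S. g p \<in> Tc) \<Longrightarrow> \<Union>(g ` S) \<in> Tc"
  by (induction S rule: finite_induct) (auto intro: Tc_Un Tc_empty)


lemma re_dec:
  fixes f :: "'a::{semilattice_inf,order_bot} \<Rightarrow> 'b::{semilattice_inf,order_bot}"
  assumes e: "semilattice_embedding f" and p: "preserves_finite_covers f"
  shows "re_preimage f (\<Union>((\<lambda>p. basic_set (fst p) (snd p) \<inter> tight_filters) ` S))
     = (\<Union>p\<in>S. basic_set (f (fst p)) (f ` snd p) \<inter> tight_filters)"
proof -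
  have "re_preimage f (\<Union>((\<lambda>p. basic_set (fst p) (snd p) \<inter> tight_filters) ` S))
     = (\<Union>p\<in>S. re_preimage f (basic_set (fst p) (snd p) \<inter> tight_filters))" by (rule re_UN)
  also have "\<dots> = (\<Union>p\<in>S. basic_set (f (fst p)) (f ` snd p) \<inter> tight_filters)"
    by (rule SUP_cong[OF refl]) (rule re_basic[OF e p])
  finally show ?thesis .
qed

theorem mainTheorem9:
  fixes f :: "'a::{semilattice_inf,order_bot} \<Rightarrow> 'b::{semilattice_inf,order_bot}"
  assumes "semilattice_embedding f"
    and "preserves_finite_covers f"
    and "\<forall>x::'b. (\<exists>z. x \<le> f z) \<longrightarrow>
           (\<exists>y Y. x \<le> f y \<and> finite Y \<and> (\<forall>yi\<in>Y. yi \<le> y \<and> inf (f yi) x = bot)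
                 \<and> finite_cover (insert x (f ` Y)) (f y))"
  shows "tight_embedding f"
proof -
  note e = assms(1) and p = assms(2) and H = assms(3)
  define Im where "Im = re_preimage f ` (Tc :: 'a set set set)"
  have Im_Un: "A \<union> B \<in> Im" if AB: "A \<in> Im" "B \<in> Im" for A B
  proof -
    obtain U V where "U \<in> Tc" "V \<in> Tc" "A = re_preimage f U" "B = re_preimage f V"
      using AB unfolding Im_def by blast
    then show ?thesis unfolding Im_def using re_Un Tc_Un by (metis image_eqI)
  qed
  have Im_Diff: "A - B \<in> Im" if AB: "A \<in> Im" "B \<in> Im" for A B
  proof -
    obtain U V where "U \<in> Tc" "V \<in> Tc" "A = re_preimage f U" "B = re_preimage f V"
      using AB unfolding Im_def by blast
    then show ?thesis unfolding Im_def using re_Diff Tc_Diff by (metis image_eqI)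
  qed
  have Im_empty: "{} \<in> Im" unfolding Im_def using re_empty Tc_empty by (metis image_eqI)
  have Im_Int: "A \<inter> B \<in> Im" if "A \<in> Im" "B \<in> Im" for A B
  proof -
    have "A \<inter> B = A - (A - B)" by blast
    then show ?thesis using Im_Diff that by metis
  qed
  have Im_UN: "\<Union>(g ` S) \<in> Im" if "finite S" "\<forall>p\<in>S. g p \<in> Im" for S and g :: "'c \<Rightarrow> 'b set set"
    using that
  proof (induction S rule: finite_induct)
    case empty
    then show ?case using Im_empty by simp
  next
    case (insert x F)
    then have "g x \<in> Im" "\<Union>(g ` F) \<in> Im" by simp_all
    then have "g x \<union> \<Union>(g ` F) \<in> Im" by (rule Im_Un)
    then show ?case by (simp only: image_insert Union_insert)
  qed
  have K1: "basic_set a {} \<inter> tight_filters \<in> Im" if az: "a \<le> f z" for a z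
  proof -
    obtain y Y where yY: "a \<le> f y" "finite Y" "\<forall>yi\<in>Y. yi \<le> y \<and> inf (f yi) a = bot"
      "finite_cover (insert a (f ` Y)) (f y)"
      using H[rule_format, OF exI[of "\<lambda>z. a \<le> f z", OF az]] by blast
    have eq: "basic_set a {} \<inter> tight_filters = basic_set (f y) (f ` Y) \<inter> tight_filters"
    proof (rule set_eqI, rule iffI)
      fix \<xi> assume h: "\<xi> \<in> basic_set a {} \<inter> tight_filters"
      then have t: "\<xi> \<in> tight_filters" and a: "a \<in> \<xi>" and fl: "\<xi> \<in> filters"
        unfolding basic_set_def by auto
      have fx: "is_filter \<xi>" using fl by (simp add: filters_def)
      have "f y \<in> \<xi>" using filter_up[OF fx a yY(1)] .
      moreover have "f ` Y \<inter> \<xi> = {}"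
      proof (rule ccontr)
        assume "f ` Y \<inter> \<xi> \<noteq> {}"
        then obtain yi where "yi \<in> Y" "f yi \<in> \<xi>" by blast
        then have "inf (f yi) a \<in> \<xi>" "inf (f yi) a = bot" using filter_inf[OF fx _ a] yY(3) by blast+
        then show False using filter_bot[OF fx] by simp
      qed
      ultimately show "\<xi> \<in> basic_set (f y) (f ` Y) \<inter> tight_filters" using t fl
        unfolding basic_set_def by blast
    next
      fix \<xi> assume h: "\<xi> \<in> basic_set (f y) (f ` Y) \<inter> tight_filters"
      then have t: "\<xi> \<in> tight_filters" and fy: "f y \<in> \<xi>" and fY: "f ` Y \<inter> \<xi> = {}" and fl: "\<xi> \<in> filters"
        unfolding basic_set_def by auto
      have "cov_prop \<xi>" using t tight_char by blast
      then have "insert a (f ` Y) \<inter> \<xi> \<noteq> {}" using fy yY(4) unfolding cov_prop_def by blast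
      then have "a \<in> \<xi>" using fY by blast
      then show "\<xi> \<in> basic_set a {} \<inter> tight_filters" using t fl unfolding basic_set_def by blast
    qed
    have "basic_set y Y \<inter> tight_filters \<in> Tc" using V_Tc[OF yY(2)] .
    moreover have "re_preimage f (basic_set y Y \<inter> tight_filters) = basic_set a {} \<inter> tight_filters"
      using re_basic[OF e p] eq by simp
    ultimately show ?thesis unfolding Im_def by (metis image_eqI)
  qed
  have K2: "basic_set a A \<inter> tight_filters \<in> Im" if "a \<le> f z" "finite A" for a z A
    using that(2)
  proof (induction A rule: finite_induct)
    case empty
    then show ?case using K1[OF that(1)] .
  next
    case (insert b A)
    have "inf a b \<le> f z" using that(1) by (meson inf.coboundedI1)
    then have I: "basic_set (inf a b) {} \<inter> tight_filters \<in> Im" by (rule K1)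
    have "basic_set a (insert b A) \<inter> tight_filters
        = (basic_set a A \<inter> tight_filters) - (basic_set (inf a b) {} \<inter> tight_filters)"
    proof (rule set_eqI)
      fix \<xi>
      show "\<xi> \<in> basic_set a (insert b A) \<inter> tight_filters \<longleftrightarrow>
        \<xi> \<in> (basic_set a A \<inter> tight_filters) - (basic_set (inf a b) {} \<inter> tight_filters)"
      proof (cases "\<xi> \<in> filters")
        case True
        then have fx: "is_filter \<xi>" by (simp add: filters_def)
        show ?thesis using filter_inf_iff[OF fx, of a b] True unfolding basic_set_def by auto
      next
        case False
        then show ?thesis unfolding basic_set_def by auto
      qed
    qed
    then show ?case using Im_Diff[OF insert.IH I] by simp
  qed
  have sub: "Im \<subseteq> (Tc :: 'b set set set)"
  proof
    fix A assume "A \<in> Im"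
    then obtain U where U: "U \<in> Tc" "A = re_preimage f U" unfolding Im_def by blast
    obtain S where S: "finite S" "\<forall>p\<in>S. finite (snd p)"
      "U = \<Union>((\<lambda>p. basic_set (fst p) (snd p) \<inter> tight_filters) ` S)"
      using Tc_dec[OF U(1)] by blast
    have Aeq: "A = (\<Union>p\<in>S. basic_set (f (fst p)) (f ` snd p) \<inter> tight_filters)"
      using U(2) S(3) re_dec[OF e p] by simp
    have all: "\<forall>p\<in>S. basic_set (f (fst p)) (f ` snd p) \<inter> tight_filters \<in> Tc"
      using S(2) V_Tc by blast
    show "A \<in> Tc" unfolding Aeq by (rule Tc_UN[OF S(1) all])
  qed
  have main: "A \<inter> W \<in> Im" if A: "A \<in> Im" and W: "W \<in> Tc" for A W
  proof -
    obtain U where U: "U \<in> Tc" "A = re_preimage f U" using A unfolding Im_def by blast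
    obtain S1 where S1: "finite S1" "\<forall>p\<in>S1. finite (snd p)"
      "U = \<Union>((\<lambda>p. basic_set (fst p) (snd p) \<inter> tight_filters) ` S1)"
      using Tc_dec[OF U(1)] by blast
    obtain S2 where S2: "finite S2" "\<forall>p\<in>S2. finite (snd p)"
      "W = \<Union>((\<lambda>p. basic_set (fst p) (snd p) \<inter> tight_filters) ` S2)"
      using Tc_dec[OF W] by blast
    have Aeq: "A = (\<Union>p\<in>S1. basic_set (f (fst p)) (f ` snd p) \<inter> tight_filters)"
      using U(2) S1(3) re_dec[OF e p] by simp
    define g :: "('a \<times> 'a set) \<times> 'b \<times> 'b set \<Rightarrow> 'b set set" where "g = (\<lambda>pq. basic_set (inf (fst (snd pq)) (f (fst (fst pq)))) (snd (snd pq)) \<inter> (tight_filters :: 'b set set))"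
    define Z where "Z = \<Union>(g ` (S1 \<times> S2))"
    have "Z \<in> Im" unfolding Z_def
    proof (rule Im_UN)
      show "finite (S1 \<times> S2)" using S1(1) S2(1) by simp
      show "\<forall>pq\<in>S1 \<times> S2. g pq \<in> Im"
      proof
        fix pq assume "pq \<in> S1 \<times> S2"
        then have "finite (snd (snd pq))" using S2(2) by auto
        moreover have "inf (fst (snd pq)) (f (fst (fst pq))) \<le> f (fst (fst pq))" by simp
        ultimately show "g pq \<in> Im" unfolding g_def using K2 by blast
      qed
    qed
    moreover have "A \<inter> W = A \<inter> Z"
    proof (rule set_eqI, rule iffI)
      fix \<xi> assume h: "\<xi> \<in> A \<inter> W"
      then obtain p where p: "p \<in> S1" "\<xi> \<in> basic_set (f (fst p)) (f ` snd p)" using Aeq by blast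
      obtain q where q: "q \<in> S2" "\<xi> \<in> basic_set (fst q) (snd q)" "\<xi> \<in> tight_filters"
        using h S2(3) by blast
      have fl: "\<xi> \<in> filters" and fx: "is_filter \<xi>" using q(2) unfolding basic_set_def filters_def by auto
      have "inf (fst q) (f (fst p)) \<in> \<xi>"
        using filter_inf[OF fx] p(2) q(2) unfolding basic_set_def by blast
      then have "\<xi> \<in> g (p, q)" using q fl unfolding g_def basic_set_def by auto
      then show "\<xi> \<in> A \<inter> Z" using h p(1) q(1) unfolding Z_def by blast
    next
      fix \<xi> assume h: "\<xi> \<in> A \<inter> Z"
      then obtain p q where pq: "p \<in> S1" "q \<in> S2" "\<xi> \<in> g (p, q)" unfolding Z_def by auto
      then have fl: "\<xi> \<in> filters" and fx: "is_filter \<xi>" and t: "\<xi> \<in> tight_filters"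
        and i: "inf (fst q) (f (fst p)) \<in> \<xi>" and s: "snd q \<inter> \<xi> = {}"
        unfolding g_def basic_set_def filters_def by auto
      have "fst q \<in> \<xi>" using filter_inf_iff[OF fx] i by blast
      then have "\<xi> \<in> basic_set (fst q) (snd q) \<inter> tight_filters" using fl t s unfolding basic_set_def by blast
      then have "\<xi> \<in> W" using S2(3) pq(2) by blast
      then show "\<xi> \<in> A \<inter> W" using h by blast
    qed
    ultimately show ?thesis using Im_Int[OF A] by simp
  qed
  have "set_ideal (Tc :: 'b set set set) Im" unfolding set_ideal_def
  proof (intro conjI ballI)
    show "Im \<subseteq> Tc" by (rule sub)
    show "U \<union> V \<in> Im" if "U \<in> Im" "V \<in> Im" for U V using Im_Un[OF that] .
    show "U \<inter> W \<in> Im" if "U \<in> Im" "W \<in> Tc" for U W using main[OF that] .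
  qed
  then show ?thesis unfolding tight_embedding_def Im_def .
qed

end
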